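(* Let $(S,d)$ be a connected metric space. Then $J^S_\bullet\subset\operatorname{ext}(B^S_\bullet)$ for $\bullet=\mathrm{FM}$ and for $\bullet=\mathrm{BL}$.
   Context: $\mathrm{BL}(S)$ is the space of bounded real-valued Lipschitz functions on $S$, $|f|_L=\sup_{x\neq y}|f(x)-f(y)|/d(x,y)$, $\|f\|_{\mathrm{BL}}=\|f\|_\infty+|f|_L$, $\|f\|_{\mathrm{FM}}=\max(\|f\|_\infty,|f|_L)$, $B^S_\bullet=\{f\in\mathrm{BL}(S):\|f\|_\bullet\le1\}$, $\operatorname{ext}$ denotes the set of extreme points. For $f\in\mathrm{BL}(S)$, $M_f=\{x\in S:|f(x)|=\|f\|_\infty\}$. $J^S_{\mathrm{FM}}$ is the set of $f\in B^S_{\mathrm{FM}}$ with $\|f\|_\infty=1$ for which there is a finite non-empty $P_f\subset S$ such that for every $x\in S\setminus M_f$ there exists $p\in P_f$ with $|f(x)-f(p)|=d(x,p)$. $J^S_{\mathrm{BL}}=\{\mathbf{1},-\mathbf{1}\}\cup\hat J^S_{\mathrm{BL}}$, where $\hat J^S_{\mathrm{BL}}$ is the set of $f\in B^S_{\mathrm{BL}}$ with $\|f\|_{\mathrm{BL}}=1$, $f(M_f)=\{\|f\|_\infty,-\|f\|_\infty\}$, and for which there is a finite non-empty $P_f\subset S$ such that for every $x\in S\setminus M_f$ there exists $p\in P_f$ with $|f(x)-f(p)|=(1-\|f\|_\infty)d(x,p)$. *)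

theory Defs
  imports "HOL-Analysis.Analysis"
begin

text \<open>The metric space S is the type 'a (class metric_space), with d = dist.\<close>

definition is_BL :: "('a::metric_space \<Rightarrow> real) \<Rightarrow> bool" where
  "is_BL f \<longleftrightarrow> bounded (range f) \<and> (\<exists>L. \<forall>x y. \<bar>f x - f y\<bar> \<le> L * dist x y)"

definition sup_norm :: "('a \<Rightarrow> real) \<Rightarrow> real" where
  "sup_norm f = (SUP x. \<bar>f x\<bar>)"

text \<open>Lipschitz constant; the 0 accounts for the empty supremum when S is a single point.\<close>
definition lip_const :: "('a::metric_space \<Rightarrow> real) \<Rightarrow> real" where
  "lip_const f = Sup ({\<bar>f x - f y\<bar> / dist x y | x y. x \<noteq> y} \<union> {0})"

definition norm_BL :: "('a::metric_space \<Rightarrow> real) \<Rightarrow> real" where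
  "norm_BL f = sup_norm f + lip_const f"

definition norm_FM :: "('a::metric_space \<Rightarrow> real) \<Rightarrow> real" where
  "norm_FM f = max (sup_norm f) (lip_const f)"

definition ball_BL :: "('a::metric_space \<Rightarrow> real) set" where
  "ball_BL = {f. is_BL f \<and> norm_BL f \<le> 1}"

definition ball_FM :: "('a::metric_space \<Rightarrow> real) set" where
  "ball_FM = {f. is_BL f \<and> norm_FM f \<le> 1}"

definition ext :: "('a \<Rightarrow> real) set \<Rightarrow> ('a \<Rightarrow> real) set" where
  "ext B = {f \<in> B. \<not> (\<exists>g\<in>B. \<exists>h\<in>B. \<exists>t::real. 0 < t \<and> t < 1 \<and> g \<noteq> h \<and>
                         f = (\<lambda>x. t * g x + (1 - t) * h x))}"

definition M_set :: "('a \<Rightarrow> real) \<Rightarrow> 'a set" where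
  "M_set f = {x. \<bar>f x\<bar> = sup_norm f}"

definition J_FM :: "('a::metric_space \<Rightarrow> real) set" where
  "J_FM = {f \<in> ball_FM. sup_norm f = 1 \<and>
      (\<exists>P. finite P \<and> P \<noteq> {} \<and>
         (\<forall>x. x \<notin> M_set f \<longrightarrow> (\<exists>p\<in>P. \<bar>f x - f p\<bar> = dist x p)))}"

definition J_BL_hat :: "('a::metric_space \<Rightarrow> real) set" where
  "J_BL_hat = {f \<in> ball_BL. norm_BL f = 1 \<and>
      f ` M_set f = {sup_norm f, - sup_norm f} \<and>
      (\<exists>P. finite P \<and> P \<noteq> {} \<and>
         (\<forall>x. x \<notin> M_set f \<longrightarrow>
            (\<exists>p\<in>P. \<bar>f x - f p\<bar> = (1 - sup_norm f) * dist x p)))}"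

definition J_BL :: "('a::metric_space \<Rightarrow> real) set" where
  "J_BL = {(\<lambda>_. 1), (\<lambda>_. -1)} \<union> J_BL_hat"

end

theory Submission
  imports Defs
begin

lemma isBL_bdd: "is_BL u \<Longrightarrow> bdd_above (range (\<lambda>x. \<bar>u x\<bar>))"
proof -
  assume "is_BL u"
  then have "bounded (range u)" unfolding is_BL_def by blast
  then obtain B where B: "\<forall>y\<in>range u. norm y \<le> B" unfolding bounded_iff by blast
  show ?thesis by (rule bdd_aboveI2[where M=B]) (use B in auto)
qed

lemma isBL_sup: "is_BL u \<Longrightarrow> \<bar>u x\<bar> \<le> sup_norm u"
  unfolding sup_norm_def by (rule cSUP_upper[OF UNIV_I isBL_bdd])

lemma isBL_lipbdd: assumes "is_BL u"
  shows "bdd_above ({\<bar>u x - u y\<bar> / dist x y | x y. x \<noteq> y} \<union> {0})"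
proof -
  obtain L where L: "\<And>x y. \<bar>u x - u y\<bar> \<le> L * dist x y" using assms unfolding is_BL_def by blast
  have "\<And>x y. x \<noteq> y \<Longrightarrow> \<bar>u x - u y\<bar> / dist x y \<le> max L 0"
  proof -
    fix x y :: 'a assume "x \<noteq> y"
    then have d: "dist x y > 0" by simp
    have "\<bar>u x - u y\<bar> / dist x y \<le> L" using L[of x y] d by (simp add: divide_le_eq)
    then show "\<bar>u x - u y\<bar> / dist x y \<le> max L 0" by simp
  qed
  then show ?thesis unfolding bdd_above_def by (rule_tac x="max L 0" in exI) auto
qed

lemma lip_nonneg: "is_BL u \<Longrightarrow> 0 \<le> lip_const u"
  unfolding lip_const_def by (rule cSup_upper[OF _ isBL_lipbdd]) simp_all

lemma isBL_lip: assumes "is_BL u" shows "\<bar>u x - u y\<bar> \<le> lip_const u * dist x y"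
proof (cases "x = y")
  case True then show ?thesis by simp
next
  case False
  then have d: "dist x y > 0" by simp
  have "\<bar>u x - u y\<bar> / dist x y \<le> lip_const u"
    unfolding lip_const_def using isBL_lipbdd[OF assms] False
    by (intro cSup_upper) auto
  then show ?thesis using d by (simp add: divide_le_eq)
qed

lemma lip_le: assumes "\<And>x y. \<bar>u x - u y\<bar> \<le> L * dist x y" "0 \<le> L"
  shows "lip_const u \<le> L"
  unfolding lip_const_def
proof (rule cSup_least)
  show "{\<bar>u x - u y\<bar> / dist x y |x y. x \<noteq> y} \<union> {0} \<noteq> {}" by simp
next
  fix z assume "z \<in> {\<bar>u x - u y\<bar> / dist x y |x y. x \<noteq> y} \<union> {0}"
  then show "z \<le> L"
  proof
    assume "z \<in> {\<bar>u x - u y\<bar> / dist x y |x y. x \<noteq> y}"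
    then obtain x y where "x \<noteq> y" "z = \<bar>u x - u y\<bar> / dist x y" by blast
    then show ?thesis using assms(1)[of x y] by (simp add: divide_le_eq)
  qed (use assms in auto)
qed

lemma isBL_cont: assumes "is_BL u" shows "continuous_on UNIV u"
  by (rule lipschitz_on_continuous_on[where L="lip_const u"], rule lipschitz_onI)
     (use isBL_lip[OF assms] lip_nonneg[OF assms] in \<open>auto simp: dist_real_def\<close>)

lemma tri_eq:
  fixes u v A B t :: real
  assumes "\<bar>u\<bar> \<le> A" "\<bar>v\<bar> \<le> B" "0 < t" "t < 1" "t * A + (1 - t) * B \<le> \<bar>t * u + (1 - t) * v\<bar>"
  shows "(u = A \<and> v = B) \<or> (u = -A \<and> v = -B)"
proof -
  have a1: "t * u \<le> t * A" by (rule mult_left_mono) (use assms in auto)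
  have a2: "t * (-u) \<le> t * A" by (rule mult_left_mono) (use assms in auto)
  have b1: "(1 - t) * v \<le> (1 - t) * B" by (rule mult_left_mono) (use assms in auto)
  have b2: "(1 - t) * (-v) \<le> (1 - t) * B" by (rule mult_left_mono) (use assms in auto)
  show ?thesis
  proof (cases "t * u + (1 - t) * v \<ge> 0")
    case True
    then have "t * u = t * A" "(1 - t) * v = (1 - t) * B" using a1 b1 assms(5) by linarith+
    then show ?thesis using assms by auto
  next
    case False
    then have "t * (-u) = t * A" "(1 - t) * (-v) = (1 - t) * B" using a2 b2 assms(5) by linarith+
    moreover have "t \<noteq> 0" "1 - t \<noteq> 0" using assms by auto
    ultimately have "-u = A" "-v = B" using mult_left_cancel by blast+
    then show ?thesis by auto
  qed
qed

lemma ballFM_pt: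
  fixes g :: "'a::metric_space \<Rightarrow> real"
  assumes "g \<in> ball_FM"
  shows "is_BL g" "\<And>x. \<bar>g x\<bar> \<le> 1" "\<And>x y. \<bar>g x - g y\<bar> \<le> dist x y"
proof -
  show bl: "is_BL g" using assms unfolding ball_FM_def by auto
  have n: "sup_norm g \<le> 1" "lip_const g \<le> 1" using assms unfolding ball_FM_def norm_FM_def by auto
  show "\<And>x. \<bar>g x\<bar> \<le> 1" using isBL_sup[OF bl] n by (meson order_trans)
  show "\<And>x y. \<bar>g x - g y\<bar> \<le> dist x y"
  proof -
    fix x y :: 'a
    have "lip_const g * dist x y \<le> 1 * dist x y" by (rule mult_right_mono) (use n in auto)
    then show "\<bar>g x - g y\<bar> \<le> dist x y" using isBL_lip[OF bl, of x y] by simp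
  qed
qed

lemma exists_near_sup:
  assumes "sup_norm f = (1::real)" "e > 0"
  shows "\<exists>x. \<bar>f x\<bar> > 1 - e"
proof (rule ccontr)
  assume "\<not> ?thesis"
  then have "\<And>x. \<bar>f x\<bar> \<le> 1 - e" by (meson not_less)
  then have "sup_norm f \<le> 1 - e" unfolding sup_norm_def by (intro cSUP_least) auto
  then show False using assms by simp
qed

lemma FM_ext:
  assumes conn: "connected (UNIV::'a::metric_space set)" and fJ: "(f::'a \<Rightarrow> real) \<in> J_FM"
  shows "f \<in> ext ball_FM"
proof -
  have fB: "f \<in> ball_FM" and s1: "sup_norm f = 1" using fJ unfolding J_FM_def by auto
  obtain P where P: "finite P" "P \<noteq> {}"
    "\<And>x. x \<notin> M_set f \<Longrightarrow> \<exists>p\<in>P. \<bar>f x - f p\<bar> = dist x p"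
    using fJ unfolding J_FM_def by blast
  have "\<not> (\<exists>g\<in>ball_FM. \<exists>h\<in>ball_FM. \<exists>t::real. 0 < t \<and> t < 1 \<and> g \<noteq> h \<and>
                         f = (\<lambda>x. t * g x + (1 - t) * h x))"
  proof
    assume "\<exists>g\<in>ball_FM. \<exists>h\<in>ball_FM. \<exists>t::real. 0 < t \<and> t < 1 \<and> g \<noteq> h \<and>
                         f = (\<lambda>x. t * g x + (1 - t) * h x)"
    then obtain g h t where gB: "g \<in> ball_FM" and hB: "h \<in> ball_FM" and t: "0 < t" "t < 1"
      and gh: "g \<noteq> h" and fe: "f = (\<lambda>x. t * g x + (1 - t) * h x)" by blast
    have fx: "\<And>x. f x = t * g x + (1 - t) * h x" using fe by simp
    note g = ballFM_pt[OF gB] and h = ballFM_pt[OF hB]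
    define k where "k = (\<lambda>x. g x - h x)"
    have kr: "k x \<in> k ` P \<union> {0}" for x
    proof (cases "x \<in> M_set f")
      case True
      then have "\<bar>f x\<bar> = 1" using s1 unfolding M_set_def by simp
      then have "t * 1 + (1 - t) * 1 \<le> \<bar>t * g x + (1 - t) * h x\<bar>" using fx by simp
      from tri_eq[OF g(2) h(2) t this] have "g x = h x" by auto
      then show ?thesis unfolding k_def by simp
    next
      case False
      then obtain p where p: "p \<in> P" "\<bar>f x - f p\<bar> = dist x p" using P by blast
      have "f x - f p = t * (g x - g p) + (1 - t) * (h x - h p)" using fx by (simp add: algebra_simps)
      then have "t * dist x p + (1 - t) * dist x p \<le> \<bar>t * (g x - g p) + (1 - t) * (h x - h p)\<bar>"
        using p by (simp add: algebra_simps)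
      from tri_eq[OF g(3) h(3) t this] have "k x = k p" unfolding k_def by auto
      then show ?thesis using p by auto
    qed
    have "range k \<subseteq> k ` P \<union> {0}" using kr by auto
    then have fin: "finite (range k)" by (rule finite_subset) (use P(1) in auto)
    have kc: "continuous_on UNIV k" unfolding k_def
      by (intro continuous_on_diff isBL_cont g(1) h(1))
    have "k constant_on UNIV" by (rule continuous_finite_range_constant[OF conn kc fin])
    then obtain c where c: "\<And>x. k x = c" unfolding constant_on_def by blast
    have cn: "c \<noteq> 0"
    proof
      assume "c = 0"
      then have "g = h" using c unfolding k_def by (intro ext) simp
      then show False using gh by simp
    qed
    have gx: "g x = f x + (1 - t) * c" and hx: "h x = f x - t * c" for x
      using fx[of x] c[of x] unfolding k_def by (simp_all add: algebra_simps)
    define e where "e = min ((1 - t) * \<bar>c\<bar>) (t * \<bar>c\<bar>)"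
    have e0: "e > 0" unfolding e_def using t cn by simp
    obtain x where x: "\<bar>f x\<bar> > 1 - e" using exists_near_sup[OF s1 e0] by blast
    have e1: "e \<le> (1 - t) * \<bar>c\<bar>" "e \<le> t * \<bar>c\<bar>" unfolding e_def by auto
    have xs: "f x > 1 - e \<or> f x < -(1 - e)" using x by linarith
    have gb: "g x \<le> 1" "g x \<ge> -1" "h x \<le> 1" "h x \<ge> -1" using g(2)[of x] h(2)[of x] by (simp_all add: abs_le_iff)
    show False
    proof (cases "c > 0")
      case True
      then have "\<bar>c\<bar> = c" by simp
      then have "e \<le> (1 - t) * c" "e \<le> t * c" using e1 by simp_all
      then show False using xs gx[of x] hx[of x] gb by linarith
    next
      case False
      then have "\<bar>c\<bar> = - c" by simp
      then have "e \<le> - ((1 - t) * c)" "e \<le> - (t * c)" using e1 by simp_all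
      then show False using xs gx[of x] hx[of x] gb by linarith
    qed
  qed
  then show ?thesis unfolding ext_def using fB by blast
qed

lemma scal:
  fixes f g h :: "'a::metric_space \<Rightarrow> real"
  assumes conn: "connected (UNIV::'a set)"
    and s: "0 < s" "s < 1" and t: "0 < t" "t < 1"
    and fx: "\<And>x. f x = t * g x + (1 - t) * h x"
    and gs: "\<And>x. \<bar>g x\<bar> \<le> sg" and hs: "\<And>x. \<bar>h x\<bar> \<le> sh"
    and gl: "\<And>x y. \<bar>g x - g y\<bar> \<le> Lg * dist x y"
    and hl: "\<And>x y. \<bar>h x - h y\<bar> \<le> Lh * dist x y"
    and sig: "t * sg + (1 - t) * sh = s" and lav: "t * Lg + (1 - t) * Lh = 1 - s"
    and a: "f a = s" and b: "f b = - s"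
    and P: "finite P" "\<And>x. \<bar>f x\<bar> \<noteq> s \<Longrightarrow> \<exists>p\<in>P. \<bar>f x - f p\<bar> = (1 - s) * dist x p"
    and gc: "continuous_on UNIV g" and hc: "continuous_on UNIV h"
  shows "g = (\<lambda>x. (Lg / (1 - s)) * f x)"
proof -
  define \<alpha> where "\<alpha> = Lg / (1 - s)"
  define q where "q = (\<lambda>x. g x - \<alpha> * f x)"
  define c0 where "c0 = sg - \<alpha> * s"
  have Mq: "(f y = s \<longrightarrow> q y = c0) \<and> (f y = - s \<longrightarrow> q y = - c0)" if "\<bar>f y\<bar> = s" for y
  proof -
    have "t * sg + (1 - t) * sh \<le> \<bar>t * g y + (1 - t) * h y\<bar>" using that fx[of y] sig by simp
    from tri_eq[OF gs hs t this]
    have "(g y = sg \<and> h y = sh) \<or> (g y = - sg \<and> h y = - sh)" .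
    then show ?thesis
    proof
      assume "g y = sg \<and> h y = sh"
      then have "f y = s" "q y = c0" using fx[of y] sig unfolding q_def c0_def by auto
      then show ?thesis using s by auto
    next
      assume "g y = - sg \<and> h y = - sh"
      moreover have "t * (- sg) + (1 - t) * (- sh) = - s" using sig by (simp add: algebra_simps)
      ultimately have fy: "f y = - s" using fx[of y] by auto
      then have "q y = - c0" using \<open>g y = - sg \<and> h y = - sh\<close> unfolding q_def c0_def by simp
      note fy this
      then show ?thesis using s by auto
    qed
  qed
  have NM: "q x = q p" if "\<bar>f x - f p\<bar> = (1 - s) * dist x p" for x p
  proof -
    define d where "d = dist x p"
    define u where "u = g x - g p"
    define v where "v = h x - h p"
    have F: "f x - f p = t * u + (1 - t) * v" unfolding u_def v_def using fx[of x] fx[of p]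
      by (simp add: algebra_simps)
    have e: "t * (Lg * d) + (1 - t) * (Lh * d) = (1 - s) * d"
      using lav by (metis distrib_right mult.assoc mult.commute)
    have "t * (Lg * d) + (1 - t) * (Lh * d) \<le> \<bar>t * u + (1 - t) * v\<bar>"
      using e F that unfolding d_def by simp
    from tri_eq[OF gl[of x p, folded u_def d_def] hl[of x p, folded v_def d_def] t this]
    have uv: "(u = Lg * d \<and> v = Lh * d) \<or> (u = - (Lg * d) \<and> v = - (Lh * d))" .
    have s1: "1 - s \<noteq> 0" using s by simp
    have au: "\<alpha> * ((1 - s) * d) = Lg * d" unfolding \<alpha>_def using s1 by simp
    from uv show ?thesis
    proof
      assume "u = Lg * d \<and> v = Lh * d"
      then have h1: "f x - f p = (1 - s) * d" "g x - g p = Lg * d" using F e unfolding u_def by auto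
      then have "g x - g p = \<alpha> * (f x - f p)" using au by metis
      then show ?thesis unfolding q_def by (simp add: algebra_simps)
    next
      assume uv2: "u = - (Lg * d) \<and> v = - (Lh * d)"
      then have "t * u + (1 - t) * v = - (t * (Lg * d) + (1 - t) * (Lh * d))" by simp
      then have "f x - f p = - ((1 - s) * d)" using F e by metis
      moreover have "g x - g p = - (Lg * d)" using uv2 unfolding u_def by simp
      ultimately have "f x - f p = - ((1 - s) * d)" "g x - g p = - (Lg * d)" by auto
      then have "g x - g p = \<alpha> * (f x - f p)" using au by (metis minus_mult_right)
      then show ?thesis unfolding q_def by (simp add: algebra_simps)
    qed
  qed
  have "range q \<subseteq> q ` P \<union> {c0, - c0}"
  proof
    fix z assume "z \<in> range q"
    then obtain x where z: "z = q x" by blast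
    show "z \<in> q ` P \<union> {c0, - c0}"
    proof (cases "\<bar>f x\<bar> = s")
      case True
      then have "f x = s \<or> f x = - s" by linarith
      then show ?thesis using Mq[OF True] z by auto
    next
      case False
      then obtain p where "p \<in> P" "\<bar>f x - f p\<bar> = (1 - s) * dist x p" using P(2) by blast
      then show ?thesis using NM z by auto
    qed
  qed
  then have fin: "finite (range q)" by (rule finite_subset) (use P(1) in auto)
  have fc: "continuous_on UNIV f"
  proof -
    have "f = (\<lambda>x. t * g x + (1 - t) * h x)" using fx by auto
    then show ?thesis using gc hc by (auto intro!: continuous_intros)
  qed
  have qc: "continuous_on UNIV q" unfolding q_def using gc fc by (auto intro!: continuous_intros)
  have "q constant_on UNIV" by (rule continuous_finite_range_constant[OF conn qc fin])
  then have qq: "q x = q a" for x unfolding constant_on_def by (metis UNIV_I)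
  have "q a = c0" using Mq[of a] a s by simp
  moreover have "q b = - c0" using Mq[of b] b s by simp
  ultimately have "c0 = 0" using qq[of b] by simp
  then have "q x = 0" for x using qq[of x] \<open>q a = c0\<close> by simp
  then show ?thesis unfolding q_def \<alpha>_def by (intro ext) (simp add: algebra_simps)
qed

lemma ballBL_pt:
  fixes g :: "'a::metric_space \<Rightarrow> real"
  assumes "g \<in> ball_BL"
  shows "is_BL g" "\<And>x. \<bar>g x\<bar> \<le> sup_norm g" "\<And>x y. \<bar>g x - g y\<bar> \<le> lip_const g * dist x y"
    "sup_norm g + lip_const g \<le> 1" "0 \<le> lip_const g" "\<And>x. \<bar>g x\<bar> \<le> 1"
proof -
  show bl: "is_BL g" using assms unfolding ball_BL_def by auto
  show n: "sup_norm g + lip_const g \<le> 1" using assms unfolding ball_BL_def norm_BL_def by auto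
  show s: "\<And>x. \<bar>g x\<bar> \<le> sup_norm g" using isBL_sup[OF bl] .
  show "\<And>x y. \<bar>g x - g y\<bar> \<le> lip_const g * dist x y" using isBL_lip[OF bl] .
  show l: "0 \<le> lip_const g" using lip_nonneg[OF bl] .
  show "\<And>x. \<bar>g x\<bar> \<le> 1" using s n l by (meson add_increasing2 order_trans)
qed

lemma BL_const:
  assumes c: "\<bar>c\<bar> = (1::real)"
  shows "(\<lambda>_::'a::metric_space. c) \<in> ext ball_BL"
proof -
  have bl: "is_BL (\<lambda>_::'a. c)" unfolding is_BL_def by (auto intro: exI[where x=0])
  have sn: "sup_norm (\<lambda>_::'a. c) = 1" unfolding sup_norm_def using c by simp
  have "lip_const (\<lambda>_::'a. c) \<le> 0" by (rule lip_le) auto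
  then have "lip_const (\<lambda>_::'a. c) = 0" using lip_nonneg[OF bl] by simp
  then have inB: "(\<lambda>_::'a. c) \<in> ball_BL" unfolding ball_BL_def norm_BL_def using bl sn by simp
  have "\<not> (\<exists>g\<in>ball_BL. \<exists>h\<in>ball_BL. \<exists>t::real. 0 < t \<and> t < 1 \<and> g \<noteq> h \<and>
                         (\<lambda>_::'a. c) = (\<lambda>x. t * g x + (1 - t) * h x))"
  proof
    assume "\<exists>g\<in>ball_BL. \<exists>h\<in>ball_BL. \<exists>t::real. 0 < t \<and> t < 1 \<and> g \<noteq> h \<and>
                         (\<lambda>_::'a. c) = (\<lambda>x. t * g x + (1 - t) * h x)"
    then obtain g h t where gB: "g \<in> ball_BL" and hB: "h \<in> ball_BL" and t: "0 < t" "t < 1"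
      and gh: "g \<noteq> h" and fe: "(\<lambda>_::'a. c) = (\<lambda>x. t * g x + (1 - t) * h x)" by blast
    have "g x = h x" for x
    proof -
      have "c = t * g x + (1 - t) * h x" using fun_cong[OF fe, of x] by simp
      then have "t * 1 + (1 - t) * 1 \<le> \<bar>t * g x + (1 - t) * h x\<bar>" using c by simp
      from tri_eq[OF ballBL_pt(6)[OF gB] ballBL_pt(6)[OF hB] t this] show ?thesis by auto
    qed
    then show False using gh by auto
  qed
  then show ?thesis unfolding ext_def using inB by blast
qed

lemma BL_hat_ext:
  assumes conn: "connected (UNIV::'a::metric_space set)" and fJ: "(f::'a \<Rightarrow> real) \<in> J_BL_hat"
  shows "f \<in> ext ball_BL"
proof -
  define s where "s = sup_norm f"
  have fB: "f \<in> ball_BL" and n1: "norm_BL f = 1" and img: "f ` M_set f = {s, - s}"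
    using fJ unfolding J_BL_hat_def s_def by auto
  obtain P where P: "finite P" "P \<noteq> {}"
    "\<And>x. x \<notin> M_set f \<Longrightarrow> \<exists>p\<in>P. \<bar>f x - f p\<bar> = (1 - s) * dist x p"
    using fJ unfolding J_BL_hat_def s_def by blast
  have P2: "\<exists>p\<in>P. \<bar>f x - f p\<bar> = (1 - s) * dist x p" if "\<bar>f x\<bar> \<noteq> s" for x
    using P(3) that unfolding M_set_def s_def by auto
  note fp = ballBL_pt[OF fB, folded s_def]
  have sL: "s + lip_const f = 1" using n1 unfolding norm_BL_def s_def by simp
  obtain a where a: "f a = s" using img by (metis imageE insertI1)
  obtain b where b: "f b = - s" using img by (metis imageE insertI1 insert_commute)
  have s0: "0 < s"
  proof (rule ccontr)
    assume "\<not> 0 < s"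
    then have "f x = 0" for x using fp(2)[of x] by simp
    then have "lip_const f \<le> 0" by (intro lip_le) auto
    then show False using sL \<open>\<not> 0 < s\<close> by simp
  qed
  have s1: "s < 1"
  proof (rule ccontr)
    assume "\<not> s < 1"
    then have "lip_const f \<le> 0" using sL by simp
    then have "lip_const f * dist a b \<le> 0" by (simp add: mult_nonpos_nonneg)
    then show False using fp(3)[of a b] a b s0 by simp
  qed
  have fc: "continuous_on UNIV f" using isBL_cont[OF fp(1)] .
  have cr: "connected (range f)" by (rule connected_continuous_image[OF fc conn])
  have "\<not> {- s<..<s} \<subseteq> f ` P"
  proof
    assume "{- s<..<s} \<subseteq> f ` P"
    then have "finite {- s<..<s}" using P(1) by (meson finite_imageI finite_subset)
    moreover have "- s < s" using s0 by simp
    ultimately show False using infinite_Ioo by blast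
  qed
  then obtain v where v: "v \<in> {- s<..<s}" "v \<notin> f ` P" by blast
  have "v \<in> range f" using cr unfolding connected_iff_interval
    using v(1) a b by (metis greaterThanLessThan_iff less_imp_le rangeI)
  then obtain x0 where x0: "f x0 = v" by blast
  have "\<bar>f x0\<bar> \<noteq> s" using x0 v(1) by auto
  then obtain p0 where p0: "p0 \<in> P" "\<bar>f x0 - f p0\<bar> = (1 - s) * dist x0 p0" using P2 by blast
  have "x0 \<noteq> p0" using p0(1) x0 v(2) by auto
  then have d0: "dist x0 p0 > 0" by simp
  have "\<not> (\<exists>g\<in>ball_BL. \<exists>h\<in>ball_BL. \<exists>t::real. 0 < t \<and> t < 1 \<and> g \<noteq> h \<and>
                         f = (\<lambda>x. t * g x + (1 - t) * h x))"
  proof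
    assume "\<exists>g\<in>ball_BL. \<exists>h\<in>ball_BL. \<exists>t::real. 0 < t \<and> t < 1 \<and> g \<noteq> h \<and>
                         f = (\<lambda>x. t * g x + (1 - t) * h x)"
    then obtain g h t where gB: "g \<in> ball_BL" and hB: "h \<in> ball_BL" and t: "0 < t" "t < 1"
      and gh: "g \<noteq> h" and fe: "f = (\<lambda>x. t * g x + (1 - t) * h x)" by blast
    have fx: "\<And>x. f x = t * g x + (1 - t) * h x" using fe by simp
    note g = ballBL_pt[OF gB] and h = ballBL_pt[OF hB]
    define sg where "sg = sup_norm g"
    define sh where "sh = sup_norm h"
    define Lg where "Lg = lip_const g"
    define Lh where "Lh = lip_const h"
    note defs = sg_def sh_def Lg_def Lh_def
    have t1: "0 < 1 - t" using t by simp
    have "t * g a \<le> t * sg" using g(2)[of a] t unfolding defs by (intro mult_left_mono) auto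
    moreover have "(1 - t) * h a \<le> (1 - t) * sh" using h(2)[of a] t unfolding defs by (intro mult_left_mono) auto
    ultimately have sig1: "s \<le> t * sg + (1 - t) * sh" using fx[of a] a by linarith
    have "t * (sg + Lg) \<le> t * 1" using g(4) t unfolding defs by (intro mult_left_mono) auto
    moreover have "(1 - t) * (sh + Lh) \<le> (1 - t) * 1" using h(4) t unfolding defs by (intro mult_left_mono) auto
    ultimately have sl: "(t * sg + (1 - t) * sh) + (t * Lg + (1 - t) * Lh) \<le> 1"
      by (simp add: algebra_simps)
    define d where "d = dist x0 p0"
    have "\<bar>t * (g x0 - g p0) + (1 - t) * (h x0 - h p0)\<bar> \<le> \<bar>t * (g x0 - g p0)\<bar> + \<bar>(1 - t) * (h x0 - h p0)\<bar>"
      by (rule abs_triangle_ineq)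
    also have "\<dots> = t * \<bar>g x0 - g p0\<bar> + (1 - t) * \<bar>h x0 - h p0\<bar>" using t by (simp add: abs_mult)
    also have "\<dots> \<le> t * (Lg * d) + (1 - t) * (Lh * d)"
    proof (rule add_mono)
      show "t * \<bar>g x0 - g p0\<bar> \<le> t * (Lg * d)" using g(3)[of x0 p0] t unfolding defs d_def
        by (intro mult_left_mono) auto
      show "(1 - t) * \<bar>h x0 - h p0\<bar> \<le> (1 - t) * (Lh * d)" using h(3)[of x0 p0] t unfolding defs d_def
        by (intro mult_left_mono) auto
    qed
    also have "\<dots> = (t * Lg + (1 - t) * Lh) * d" by (simp add: algebra_simps)
    finally have "(1 - s) * d \<le> (t * Lg + (1 - t) * Lh) * d"
      using p0(2) fx[of x0] fx[of p0] unfolding d_def by (simp add: algebra_simps)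
    then have lav1: "1 - s \<le> t * Lg + (1 - t) * Lh" using d0 unfolding d_def
      by (simp add: mult_le_cancel_right_pos)
    have sig: "t * sg + (1 - t) * sh = s" and lav: "t * Lg + (1 - t) * Lh = 1 - s"
      using sig1 sl lav1 by linarith+
    have gc: "continuous_on UNIV g" and hc: "continuous_on UNIV h"
      using isBL_cont g(1) h(1) by auto
    have ga: "g = (\<lambda>x. (Lg / (1 - s)) * f x)"
      by (rule scal[OF conn s0 s1 t fx g(2)[folded sg_def] h(2)[folded sh_def]
            g(3)[folded Lg_def] h(3)[folded Lh_def] sig lav a b P(1) P2 gc hc])
    have t': "0 < 1 - t" "1 - t < 1" using t by auto
    have fx': "\<And>x. f x = (1 - t) * h x + (1 - (1 - t)) * g x" using fx by (simp add: algebra_simps)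
    have sig': "(1 - t) * sh + (1 - (1 - t)) * sg = s" using sig by simp
    have lav': "(1 - t) * Lh + (1 - (1 - t)) * Lg = 1 - s" using lav by simp
    have hb: "h = (\<lambda>x. (Lh / (1 - s)) * f x)"
      by (rule scal[OF conn s0 s1 t' fx' h(2)[folded sh_def] g(2)[folded sg_def]
            h(3)[folded Lh_def] g(3)[folded Lg_def] sig' lav' a b P(1) P2 hc gc])
    define \<alpha> where "\<alpha> = Lg / (1 - s)"
    define \<beta> where "\<beta> = Lh / (1 - s)"
    have ga': "g = (\<lambda>x. \<alpha> * f x)" and hb': "h = (\<lambda>x. \<beta> * f x)" using ga hb \<alpha>_def \<beta>_def by auto
    have s1': "1 - s \<noteq> 0" using s1 by simp
    have Lga: "Lg = \<alpha> * (1 - s)" and Lhb: "Lh = \<beta> * (1 - s)" unfolding \<alpha>_def \<beta>_def using s1' by simp_all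
    have "\<alpha> * s \<le> sg" using g(2)[of a] a ga' unfolding sg_def by (metis abs_ge_self order_trans)
    then have \<alpha>1: "\<alpha> \<le> 1" using g(4) Lga unfolding sg_def Lg_def by (simp add: algebra_simps)
    have "\<beta> * s \<le> sh" using h(2)[of a] a hb' unfolding sh_def by (metis abs_ge_self order_trans)
    then have \<beta>1: "\<beta> \<le> 1" using h(4) Lhb unfolding sh_def Lh_def by (simp add: algebra_simps)
    have "s * 1 = s * (t * \<alpha> + (1 - t) * \<beta>)" using fx[of a] a ga' hb' by (simp add: algebra_simps)
    then have avg: "t * \<alpha> + (1 - t) * \<beta> = 1" using s0 by simp
    have n1: "0 \<le> t * (1 - \<alpha>)" "0 \<le> (1 - t) * (1 - \<beta>)" using t \<alpha>1 \<beta>1 by simp_all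
    have "t * (1 - \<alpha>) + (1 - t) * (1 - \<beta>) = 0" using avg by (simp add: algebra_simps)
    then have "t * (1 - \<alpha>) = 0" "(1 - t) * (1 - \<beta>) = 0" using n1 by linarith+
    then have "\<alpha> = 1" "\<beta> = 1" using t by auto
    then have "g = h" using ga' hb' by simp
    then show False using gh by simp
  qed
  then show ?thesis unfolding ext_def using fB by blast
qed

theorem proposition5p3:
  assumes "connected (UNIV :: 'a::metric_space set)"
  shows "(J_FM :: ('a \<Rightarrow> real) set) \<subseteq> ext ball_FM \<and>
         (J_BL :: ('a \<Rightarrow> real) set) \<subseteq> ext ball_BL"
proof
  show "(J_FM :: ('a \<Rightarrow> real) set) \<subseteq> ext ball_FM" using FM_ext[OF assms] by blast
  show "(J_BL :: ('a \<Rightarrow> real) set) \<subseteq> ext ball_BL"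
    unfolding J_BL_def using BL_hat_ext[OF assms] BL_const[of 1] BL_const[of "-1"] by auto
qed

end
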